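(* Let $\alpha$ be fixed and let $p_1,p_2,\ldots$ be i.i.d. with distribution function $P$ as in the context. Let $q\in[0,1]$ and suppose $P$ is Simes-detectable at $q\alpha$. Then there is a sequence of (data-dependent) sets $(J_m)_{m\ge1}$ with $J_m\subseteq\{1,\ldots,m\}$ such that $q_{\alpha,m}(J_m)\le\bar\pi_\alpha q$ for all $m$, and $\lim_{m\to\infty}\mathrm{P}(|J_m|/m\ge y)=1$ for some $y>0$.
   Context: Efron mixture model: $P(x)=\gamma x+(1-\gamma)P_1(x)$ on $[0,1]$ with $\gamma\in[0,1]$ and $P_1$ a distribution function with $P_1(x)\ge x$. Define $\bar\pi_a=\inf_{0\le x<1}\frac{1-P(xa)}{1-x}$ if $P(a)<1$ and $\bar\pi_a=0$ otherwise. $P$ is Simes-detectable at $a$ if $\bar\pi_a<1$ (equivalently, $P(xa)>x$ for some $0\le x<1$, or $P(a)=1$). For the first $m$ $p$-values: for $I\subseteq\{1,\ldots,m\}$, $p_{(i:I)}$ is the $i$-th smallest of $\{p_j:j\in I\}$; Simes test: $I\in\mathcal{U}_\alpha$ iff some $1\le i\le|I|$ has $|I|p_{(i:I)}\le i\alpha$; $\mathcal{X}_\alpha=\{I: J\in\mathcal{U}_\alpha\ \forall J\supseteq I, J\subseteq\{1,\ldots,m\}\}$; $t_{\alpha,m}(S)=\max\{|I|: I\subseteq S, I\notin\mathcal{X}_\alpha\}$; $q_{\alpha,m}(S)=t_{\alpha,m}(S)/|S|$ for $S\ne\emptyset$ and $0$ for $S=\emptyset$. *)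

theory Defs
  imports "HOL-Probability.Probability"
begin

text \<open>p-values are given as a function x :: nat => real, x j being p_j (indices from 1).\<close>

definition order_stat :: "(nat \<Rightarrow> real) \<Rightarrow> nat set \<Rightarrow> nat \<Rightarrow> real" where
  "order_stat x I i = sort (map x (sorted_list_of_set I)) ! (i - 1)"

definition simes_rejects :: "real \<Rightarrow> (nat \<Rightarrow> real) \<Rightarrow> nat set \<Rightarrow> bool" where
  "simes_rejects \<alpha> x I \<longleftrightarrow>
     (\<exists>i\<in>{1..card I}. real (card I) * order_stat x I i \<le> real i * \<alpha>)"

definition simes_X :: "real \<Rightarrow> nat \<Rightarrow> (nat \<Rightarrow> real) \<Rightarrow> nat set set" where
  "simes_X \<alpha> m x = {I. I \<subseteq> {1..m} \<and>
       (\<forall>J. I \<subseteq> J \<and> J \<subseteq> {1..m} \<longrightarrow> simes_rejects \<alpha> x J)}"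

definition simes_t :: "real \<Rightarrow> nat \<Rightarrow> (nat \<Rightarrow> real) \<Rightarrow> nat set \<Rightarrow> nat" where
  "simes_t \<alpha> m x S = Max (card ` {I. I \<subseteq> S \<and> I \<notin> simes_X \<alpha> m x})"

definition simes_q :: "real \<Rightarrow> nat \<Rightarrow> (nat \<Rightarrow> real) \<Rightarrow> nat set \<Rightarrow> real" where
  "simes_q \<alpha> m x S = (if S = {} then 0 else real (simes_t \<alpha> m x S) / real (card S))"

definition pibar :: "(real \<Rightarrow> real) \<Rightarrow> real \<Rightarrow> real" where
  "pibar P a = (if P a < 1 then (INF x\<in>{0..<1}. (1 - P (x * a)) / (1 - x)) else 0)"

definition simes_detectable :: "(real \<Rightarrow> real) \<Rightarrow> real \<Rightarrow> bool" where
  "simes_detectable P a \<longleftrightarrow> pibar P a < 1"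

end

theory Submission imports Defs "HOL-Real_Asymp.Real_Asymp" begin


lemma length_filter_sort: "length (filter P (sort xs)) = length (filter P xs)"
  by (metis mset_filter mset_sort size_mset)

lemma sorted_nth_le_count:
  fixes L :: "real list"
  assumes "sorted L" "1 \<le> i" "i \<le> length (filter (\<lambda>v. v \<le> t) L)"
  shows "L ! (i - 1) \<le> t"
proof (rule ccontr)
  assume "\<not> L ! (i - 1) \<le> t"
  then have gt: "L ! (i - 1) > t" by simp
  have ilen: "i \<le> length L" using assms(3) length_filter_le order_trans by blast
  have "filter (\<lambda>v. v \<le> t) (drop (i - 1) L) = []"
  proof (rule filter_False, rule ballI)
    fix v assume "v \<in> set (drop (i - 1) L)"
    then obtain j where j: "j < length (drop (i - 1) L)" "v = drop (i - 1) L ! j"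
      by (auto simp: in_set_conv_nth)
    then have "v = L ! (i - 1 + j)" "i - 1 + j < length L" by auto
    moreover have "L ! (i - 1) \<le> L ! (i - 1 + j)"
      using assms(1) calculation(2) by (intro sorted_nth_mono) auto
    ultimately show "\<not> v \<le> t" using gt by auto
  qed
  then have "filter (\<lambda>v. v \<le> t) L = filter (\<lambda>v. v \<le> t) (take (i - 1) L)"
    by (metis append_Nil2 append_take_drop_id filter_append)
  then have "length (filter (\<lambda>v. v \<le> t) L) \<le> i - 1"
    by (metis length_filter_le length_take min.absorb_iff2 min_def order_trans)
  then show False using assms(2,3) by linarith
qed

lemma count_list_card:
  assumes "finite K"
  shows "length (filter (\<lambda>v. v \<le> t) (sort (map x (sorted_list_of_set K)))) = card {j\<in>K. x j \<le> t}"
proof -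
  have "length (filter (\<lambda>v. v \<le> t) (sort (map x (sorted_list_of_set K))))
      = length (filter (\<lambda>j. x j \<le> t) (sorted_list_of_set K))"
    by (simp add: length_filter_sort filter_map comp_def)
  also have "\<dots> = card (set (filter (\<lambda>j. x j \<le> t) (sorted_list_of_set K)))"
    by (rule distinct_card[symmetric]) simp
  also have "set (filter (\<lambda>j. x j \<le> t) (sorted_list_of_set K)) = {j\<in>K. x j \<le> t}"
    using assms by auto
  finally show ?thesis .
qed

lemma order_stat_le:
  assumes "finite K" "1 \<le> i" "i \<le> card {j\<in>K. x j \<le> t}"
  shows "order_stat x K i \<le> t"
  unfolding order_stat_def
  by (rule sorted_nth_le_count) (use assms count_list_card[OF assms(1), of t x] in auto)

lemma rejects_by_count:
  assumes "finite K" "1 \<le> i" "i \<le> card {j\<in>K. x j \<le> t}"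
    and "real (card K) * t \<le> real i * \<alpha>"
  shows "simes_rejects \<alpha> x K"
proof -
  have "card {j\<in>K. x j \<le> t} \<le> card K" using assms(1) by (intro card_mono) auto
  then have i: "i \<in> {1..card K}" using assms by auto
  have mo: "real (card K) * order_stat x K i \<le> real (card K) * t"
    using order_stat_le[OF assms(1-3)] by (intro mult_left_mono) auto
  show ?thesis unfolding simes_rejects_def
    by (intro bexI[of _ i] i) (use mo assms(4) in linarith)
qed

lemma in_simes_X:
  fixes x :: "nat \<Rightarrow> real"
  assumes N0_def: "N0 = card {i\<in>{1..m}. x i \<le> t0}"
  assumes I: "I \<subseteq> {i\<in>{1..m}. x i \<le> c}" "r \<le> card I" "1 \<le> r"
    and H: "\<And>k. r \<le> k \<Longrightarrow> k \<le> m \<Longrightarrow>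
        real k * c \<le> real r * \<alpha> \<or> (m < k + N0 \<and> real k * t0 \<le> real (k + N0 - m) * \<alpha>)"
  shows "I \<in> simes_X \<alpha> m x"
  unfolding simes_X_def
proof (intro CollectI conjI allI impI)
  show "I \<subseteq> {1..m}" using I by auto
  fix K assume K: "I \<subseteq> K \<and> K \<subseteq> {1..m}"
  have fK: "finite K" using K finite_subset by blast
  have "card I \<le> card K" using K fK by (intro card_mono) auto
  moreover have Km: "card K \<le> m" using K card_mono[of "{1..m}" K] by auto
  ultimately consider "real (card K) * c \<le> real r * \<alpha>"
    | "m < card K + N0 \<and> real (card K) * t0 \<le> real (card K + N0 - m) * \<alpha>"
    using H[of "card K"] I by force
  then show "simes_rejects \<alpha> x K"
  proof cases
    case 1
    have "card I \<le> card {j\<in>K. x j \<le> c}"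
      using I K fK by (intro card_mono) auto
    then show ?thesis using rejects_by_count[OF fK, of r x c \<alpha>] 1 I by linarith
  next
    case 2
    have sub: "{i\<in>{1..m}. x i \<le> t0} \<subseteq> {j\<in>K. x j \<le> t0} \<union> ({1..m} - K)" by auto
    have "N0 \<le> card ({j\<in>K. x j \<le> t0} \<union> ({1..m} - K))"
      unfolding N0_def by (rule card_mono[OF _ sub]) (use fK in auto)
    also have "\<dots> \<le> card {j\<in>K. x j \<le> t0} + card ({1..m} - K)" by (rule card_Un_le)
    also have "card ({1..m} - K) = m - card K"
      using K fK by (subst card_Diff_subset) auto
    finally have "card K + N0 - m \<le> card {j\<in>K. x j \<le> t0}" using Km by linarith
    then show ?thesis using rejects_by_count[OF fK, of "card K + N0 - m" x t0 \<alpha>] 2 by linarith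
  qed
qed

lemma empty_notin_simes_X: "{} \<notin> simes_X \<alpha> m x"
  unfolding simes_X_def simes_rejects_def by auto

lemma simes_t_le:
  assumes "finite S" "\<And>I. I \<subseteq> S \<Longrightarrow> r \<le> card I \<Longrightarrow> I \<in> simes_X \<alpha> m x"
  shows "simes_t \<alpha> m x S \<le> r - 1"
proof -
  have sub: "card ` {I. I \<subseteq> S \<and> I \<notin> simes_X \<alpha> m x} \<subseteq> {..<r}"
    using assms(2) by force
  have ne: "card ` {I. I \<subseteq> S \<and> I \<notin> simes_X \<alpha> m x} \<noteq> {}"
    using empty_notin_simes_X by blast
  have fin: "finite (card ` {I. I \<subseteq> S \<and> I \<notin> simes_X \<alpha> m x})"
    using finite_subset[OF sub] by blast
  show ?thesis unfolding simes_t_def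
    using sub by (subst Max_le_iff[OF fin ne]) force
qed



lemma LLN:
  fixes M :: "'w measure" and p :: "nat \<Rightarrow> 'w \<Rightarrow> real" and P :: "real \<Rightarrow> real"
  assumes "prob_space M"
    and p_rv: "\<And>i. i \<ge> 1 \<Longrightarrow> p i \<in> borel_measurable M"
    and p_dist: "\<And>i x. i \<ge> 1 \<Longrightarrow> x \<in> {0..1} \<Longrightarrow>
                    measure M {\<omega>\<in>space M. p i \<omega> \<le> x} = P x"
    and p_indep: "prob_space.indep_vars M (\<lambda>_. borel) p {1..}"
    and t: "t \<in> {0..1}" and eps: "\<epsilon> > 0"
  shows "(\<lambda>m. measure M {\<omega>\<in>space M. \<bar>(\<Sum>i\<in>{1..m}. if p i \<omega> \<le> t then 1 else 0) / real m - P t\<bar> \<ge> \<epsilon>}) \<longlonglongrightarrow> 0"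
proof -
  interpret prob_space M by fact
  define X :: "nat \<Rightarrow> 'w \<Rightarrow> real" where "X i \<omega> = (if p i \<omega> \<le> t then 1 else 0)" for i \<omega>
  have Xs: "X i \<omega> = (if p i \<omega> \<le> t then 1 else 0)" if "\<omega> \<in> space M" for i \<omega>
    by (simp add: X_def)
  have meas: "{\<omega>\<in>space M. p i \<omega> \<le> t} \<in> sets M" if "i \<ge> 1" for i
    using p_rv[OF that] by measurable
  have EX: "expectation (X i) = P t" if "i \<ge> 1" for i
  proof -
    have "expectation (X i) = expectation (indicator {\<omega>\<in>space M. p i \<omega> \<le> t})"
      by (rule Bochner_Integration.integral_cong) (auto simp: X_def indicator_def)
    then show ?thesis using meas[OF that] p_dist[OF that t] by simp
  qed
  have bound: "prob {\<omega>\<in>space M. \<bar>(\<Sum>i\<in>{1..m}. if p i \<omega> \<le> t then 1 else 0) / real m - P t\<bar> \<ge> \<epsilon>}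
      \<le> 2 * exp (-2 * \<epsilon>\<^sup>2 * real m)" if m: "m \<ge> 1" for m
  proof -
    have ind: "indep_vars (\<lambda>_. borel) X {1..m}"
    proof -
      have "indep_vars (\<lambda>_. borel) p {1..m}"
        by (rule indep_vars_subset[OF p_indep]) auto
      then have "indep_vars (\<lambda>_. borel) (\<lambda>i \<omega>. (\<lambda>v. if v \<le> t then 1 else (0::real)) (p i \<omega>)) {1..m}"
        by (rule indep_vars_compose2) measurable
      then show ?thesis
        by (rule indep_vars_cong[THEN iffD1, rotated -1]) (auto simp: X_def fun_eq_iff)
    qed
    interpret H: Hoeffding_ineq M "{1..m}" X "\<lambda>_. 0" "\<lambda>_. 1" "\<Sum>i\<in>{1..m}. expectation (X i)"
      apply unfold_locales
      using ind apply (auto simp: X_def)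
      done
    have mu: "(\<Sum>i\<in>{1..m}. expectation (X i)) = real m * P t"
      using EX by simp
    have "prob {\<omega>\<in>space M. \<bar>(\<Sum>i\<in>{1..m}. X i \<omega>) - (\<Sum>i\<in>{1..m}. expectation (X i))\<bar> \<ge> \<epsilon> * m}
        \<le> 2 * exp (- 2 * (\<epsilon> * m)\<^sup>2 / (\<Sum>i\<in>{1..m}. (1 - 0)\<^sup>2))"
      by (rule H.Hoeffding_ineq_abs_ge) (use eps m in auto)
    also have "\<dots> = 2 * exp (-2 * \<epsilon>\<^sup>2 * real m)"
      using m by (simp add: power2_eq_square)
    also have "{\<omega>\<in>space M. \<bar>(\<Sum>i\<in>{1..m}. X i \<omega>) - (\<Sum>i\<in>{1..m}. expectation (X i))\<bar> \<ge> \<epsilon> * m}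
       = {\<omega>\<in>space M. \<bar>(\<Sum>i\<in>{1..m}. if p i \<omega> \<le> t then 1 else 0) / real m - P t\<bar> \<ge> \<epsilon>}"
    proof (intro Collect_cong conj_cong refl)
      fix \<omega> assume "\<omega> \<in> space M"
      then have "(\<Sum>i\<in>{1..m}. X i \<omega>) = (\<Sum>i\<in>{1..m}. if p i \<omega> \<le> t then 1 else 0)"
        by (simp add: Xs)
      moreover have "\<bar>S / real m - P t\<bar> = \<bar>S - real m * P t\<bar> / real m" for S
      proof -
        have "S / real m - P t = (S - real m * P t) / real m" using m by (simp add: field_simps)
        then show ?thesis using m by simp
      qed
      ultimately show "(\<epsilon> * m \<le> \<bar>(\<Sum>i\<in>{1..m}. X i \<omega>) - (\<Sum>i\<in>{1..m}. expectation (X i))\<bar>) =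
         (\<epsilon> \<le> \<bar>(\<Sum>i\<in>{1..m}. if p i \<omega> \<le> t then 1 else 0) / real m - P t\<bar>)"
        using m by (simp only: mu) (simp add: pos_le_divide_eq mult.commute)
    qed
    finally show ?thesis .
  qed
  show ?thesis
  proof (rule tendsto_sandwich[of "\<lambda>_. 0" _ _ "\<lambda>m. 2 * exp (-2 * \<epsilon>\<^sup>2 * real m)"])
    show "\<forall>\<^sub>F n in sequentially. 0 \<le> measure M {\<omega>\<in>space M. \<bar>(\<Sum>i\<in>{1..n}. if p i \<omega> \<le> t then 1 else 0) / real n - P t\<bar> \<ge> \<epsilon>}"
      by simp
    show "\<forall>\<^sub>F n in sequentially. measure M {\<omega>\<in>space M. \<bar>(\<Sum>i\<in>{1..n}. if p i \<omega> \<le> t then 1 else 0) / real n - P t\<bar> \<ge> \<epsilon>} \<le> 2 * exp (-2 * \<epsilon>\<^sup>2 * real n)"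
      using eventually_ge_at_top[of 1] by (rule eventually_mono) (rule bound)
    show "(\<lambda>_. 0) \<longlonglongrightarrow> (0::real)" by simp
    show "(\<lambda>m. 2 * exp (-2 * \<epsilon>\<^sup>2 * real m)) \<longlonglongrightarrow> 0"
      using eps by real_asymp
  qed
qed


lemma q_bound:
  fixes x :: "nat \<Rightarrow> real"
  assumes al: "0 < \<alpha>" and x0: "0 \<le> x0" "x0 < 1" and x1: "0 \<le> x1" and q: "0 \<le> q" and pi: "0 \<le> \<pi>"
    and c: "c = x1 * q * \<alpha>" and t0: "t0 = x0 * \<alpha>"
    and cond: "x1 * (real m - real (card {i\<in>{1..m}. x i \<le> t0})) \<le> \<pi> * (1 - x0) * real (card {i\<in>{1..m}. x i \<le> c})"
  shows "simes_q \<alpha> m x {i\<in>{1..m}. x i \<le> c} \<le> \<pi> * q"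
proof (cases "{i\<in>{1..m}. x i \<le> c} = {}")
  case True then show ?thesis using pi q by (simp add: simes_q_def)
next
  case False
  define N0 where "N0 = card {i\<in>{1..m}. x i \<le> t0}"
  define Nc where "Nc = card {i\<in>{1..m}. x i \<le> c}"
  have N0m: "N0 \<le> m"
  proof -
    have "N0 \<le> card {1..m}" unfolding N0_def by (rule card_mono) auto
    then show ?thesis by simp
  qed
  have Ncpos: "Nc > 0" unfolding Nc_def using False by (simp add: card_gt_0_iff)
  have c0: "c \<ge> 0" using c x1 q al by simp
  define B where "B = c * (real m - real N0) / (\<alpha> * (1 - x0))"
  have B0: "B \<ge> 0" unfolding B_def using c0 N0m al x0 by (intro divide_nonneg_pos) auto
  define r where "r = nat \<lfloor>B\<rfloor> + 1"
  have rB: "real r > B" unfolding r_def using B0 by linarith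
  have r1: "1 \<le> r" unfolding r_def by simp
  have X: "I \<in> simes_X \<alpha> m x" if I: "I \<subseteq> {i\<in>{1..m}. x i \<le> c}" "r \<le> card I" for I
  proof (rule in_simes_X[OF N0_def I r1])
    fix k assume k: "r \<le> k" "k \<le> m"
    show "real k * c \<le> real r * \<alpha> \<or> (m < k + N0 \<and> real k * t0 \<le> real (k + N0 - m) * \<alpha>)"
    proof (cases "real k * c \<le> real r * \<alpha>")
      case True then show ?thesis by simp
    next
      case False
      have "real r * \<alpha> > B * \<alpha>" using rB al by simp
      also have "B * \<alpha> = c * (real m - real N0) / (1 - x0)" unfolding B_def using al x0 by (simp add: field_simps)
      finally have "real k * c > c * (real m - real N0) / (1 - x0)" using False by simp
      then have lt: "real k * c * (1 - x0) > c * (real m - real N0)" using x0 by (simp add: field_simps)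
      have cpos: "c > 0"
      proof (rule ccontr)
        assume "\<not> c > 0" then have "c = 0" using c0 by simp
        then show False using False r1 al by simp
      qed
      have lt2: "real k * (1 - x0) > real m - real N0"
        using lt cpos by (simp add: mult.commute mult.left_commute)
      have kx0: "real k * x0 \<ge> 0" using x0 by simp
      have mk: "m < k + N0" using lt2 kx0 by (simp add: algebra_simps)
      have "real (k + N0 - m) = real k + real N0 - real m" using mk by simp
      moreover have "real k * x0 \<le> real k + real N0 - real m" using lt2 by (simp add: algebra_simps)
      ultimately have "real k * x0 * \<alpha> \<le> real (k + N0 - m) * \<alpha>" using al by (intro mult_right_mono) auto
      then show ?thesis using mk t0 by (simp add: mult.assoc)
    qed
  qed
  have t: "simes_t \<alpha> m x {i\<in>{1..m}. x i \<le> c} \<le> r - 1"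
    by (rule simes_t_le) (use X in auto)
  have tB: "real (simes_t \<alpha> m x {i\<in>{1..m}. x i \<le> c}) \<le> B"
  proof -
    have "real (r - 1) = real (nat \<lfloor>B\<rfloor>)" unfolding r_def by simp
    also have "\<dots> \<le> B" using B0 by linarith
    finally show ?thesis using t by (meson of_nat_le_iff order_trans)
  qed
  have "B \<le> \<pi> * q * real Nc"
  proof -
    have "x1 * (real m - real N0) * (q * \<alpha>) \<le> \<pi> * (1 - x0) * real Nc * (q * \<alpha>)"
      using cond q al unfolding N0_def Nc_def by (intro mult_right_mono) auto
    then have "c * (real m - real N0) \<le> \<pi> * q * real Nc * (\<alpha> * (1 - x0))"
      unfolding c by (simp add: algebra_simps)
    then show ?thesis unfolding B_def using al x0 by (simp add: divide_le_eq)
  qed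
  then have "real (simes_t \<alpha> m x {i\<in>{1..m}. x i \<le> c}) \<le> \<pi> * q * real Nc" using tB by linarith
  then show ?thesis unfolding simes_q_def using False Ncpos pi q unfolding Nc_def
    by (simp add: divide_le_eq)
qed

lemma zero_bound:
  fixes x :: "nat \<Rightarrow> real"
  assumes al: "0 < \<alpha>" and all: "\<forall>i\<in>{1..m}. x i \<le> \<alpha>"
  shows "simes_q \<alpha> m x {i\<in>{1..m}. x i \<le> \<alpha>} = 0"
proof -
  have "{i\<in>{1..m}. x i \<le> \<alpha>} = {1..m}" using all by auto
  then have N: "card {i\<in>{1..m}. x i \<le> \<alpha>} = m" by simp
  have X: "I \<in> simes_X \<alpha> m x" if I: "I \<subseteq> {i\<in>{1..m}. x i \<le> \<alpha>}" "1 \<le> card I" for I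
  proof (rule in_simes_X[OF N[symmetric] I order_refl])
    fix k assume k: "1 \<le> k" "k \<le> m"
    show "real k * \<alpha> \<le> real 1 * \<alpha> \<or> (m < k + m \<and> real k * \<alpha> \<le> real (k + m - m) * \<alpha>)"
      using k by simp
  qed
  have "simes_t \<alpha> m x {i\<in>{1..m}. x i \<le> \<alpha>} \<le> 1 - 1"
    by (rule simes_t_le) (use X in auto)
  then show ?thesis unfolding simes_q_def by simp
qed

theorem theorem2:
  fixes M :: "'w measure" and p :: "nat \<Rightarrow> 'w \<Rightarrow> real"
    and P P1 :: "real \<Rightarrow> real" and \<gamma> \<alpha> q :: real
  assumes "prob_space M"
    and alpha: "0 < \<alpha>" "\<alpha> < 1"
    and gamma: "0 \<le> \<gamma>" "\<gamma> \<le> 1"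
    and P1_mono: "mono_on {0..1} P1"
    and P1_range: "\<And>x. x \<in> {0..1} \<Longrightarrow> 0 \<le> P1 x \<and> P1 x \<le> 1"
    and P1_one: "P1 1 = 1"
    and P1_rcont: "\<And>x. x \<in> {0..<1} \<Longrightarrow> continuous (at x within {x..1}) P1"
    and P1_ge: "\<And>x. x \<in> {0..1} \<Longrightarrow> P1 x \<ge> x"
    and P_mix: "\<And>x. x \<in> {0..1} \<Longrightarrow> P x = \<gamma> * x + (1 - \<gamma>) * P1 x"
    and p_rv: "\<And>i. i \<ge> 1 \<Longrightarrow> p i \<in> borel_measurable M"
    and p_range: "\<And>i. i \<ge> 1 \<Longrightarrow> AE \<omega> in M. p i \<omega> \<in> {0..1}"
    and p_dist: "\<And>i x. i \<ge> 1 \<Longrightarrow> x \<in> {0..1} \<Longrightarrow>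
                    measure M {\<omega>\<in>space M. p i \<omega> \<le> x} = P x"
    and p_indep: "prob_space.indep_vars M (\<lambda>_. borel) p {1..}"
    and q: "0 \<le> q" "q \<le> 1"
    and detect: "simes_detectable P (q * \<alpha>)"
  shows "\<exists>J :: nat \<Rightarrow> (nat \<Rightarrow> real) \<Rightarrow> nat set.
           (\<forall>m x. J m x \<subseteq> {1..m}) \<and>
           (\<forall>m x x'. (\<forall>i\<in>{1..m}. x i = x' i) \<longrightarrow> J m x = J m x') \<and>
           (\<forall>m\<ge>1. \<forall>\<omega>\<in>space M.
              simes_q \<alpha> m (\<lambda>i. p i \<omega>) (J m (\<lambda>i. p i \<omega>)) \<le> pibar P \<alpha> * q) \<and>
           (\<exists>y>0. (\<lambda>m. measure M {\<omega>\<in>space M.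
                      real (card (J m (\<lambda>i. p i \<omega>))) / real m \<ge> y}) \<longlonglongrightarrow> 1)"
proof -
  interpret prob_space M by fact
  have Pmono: "P a \<le> P b" if "0 \<le> a" "a \<le> b" "b \<le> 1" for a b
  proof -
    have "P1 a \<le> P1 b" using P1_mono that by (auto intro: mono_onD)
    then have "(1 - \<gamma>) * P1 a \<le> (1 - \<gamma>) * P1 b" using gamma by (intro mult_left_mono) auto
    moreover have "\<gamma> * a \<le> \<gamma> * b" using gamma that by (intro mult_left_mono) auto
    ultimately show ?thesis using P_mix[of a] P_mix[of b] that by auto
  qed
  have Ple1: "P a \<le> 1" if "a \<in> {0..1}" for a
  proof -
    have "\<gamma> * a \<le> \<gamma>" using gamma that by (simp add: mult_left_le)
    moreover have "(1 - \<gamma>) * P1 a \<le> 1 - \<gamma>" using gamma P1_range[OF that] by (simp add: mult_left_le)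
    ultimately show ?thesis using P_mix[OF that] by linarith
  qed
  have Pge0: "P a \<ge> 0" if "a \<in> {0..1}" for a
    using P_mix[OF that] gamma P1_range[OF that] that by auto
  define Nr where "Nr m t \<omega> = (\<Sum>i\<in>{1..m}. if p i \<omega> \<le> t then 1 else 0::real)" for m t \<omega>
  have Nr_meas[measurable]: "Nr m t \<in> borel_measurable M" for m t
    unfolding Nr_def
  proof (rule borel_measurable_sum)
    fix i assume "i \<in> {1..m}"
    then have [measurable]: "p i \<in> borel_measurable M" using p_rv by auto
    show "(\<lambda>\<omega>. if p i \<omega> \<le> t then 1 else 0::real) \<in> borel_measurable M" by measurable
  qed
  have card_Nr: "real (card {i\<in>{1..m}. x i \<le> t}) = (\<Sum>i\<in>{1..m}. if x i \<le> t then 1 else 0)"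
    for m t and x :: "nat \<Rightarrow> real"
    by (simp add: sum.inter_filter[symmetric])
  show ?thesis
  proof (cases "P \<alpha> < 1")
    case False
    then have Pa: "P \<alpha> = 1" using Ple1[of \<alpha>] alpha by auto
    have pib: "pibar P \<alpha> = 0" unfolding pibar_def using False by simp
    define J where "J m x = (if \<forall>i\<in>{1..m}. x i \<le> \<alpha> then {i\<in>{1..m}. x i \<le> \<alpha>} else {})"
      for m and x :: "nat \<Rightarrow> real"
    show ?thesis
    proof (intro exI[of _ J] conjI allI impI ballI)
      fix m and x :: "nat \<Rightarrow> real" show "J m x \<subseteq> {1..m}" unfolding J_def by auto
    next
      fix m and x x' :: "nat \<Rightarrow> real" assume "\<forall>i\<in>{1..m}. x i = x' i"
      then show "J m x = J m x'" unfolding J_def by auto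
    next
      fix m :: nat and \<omega> assume "m \<ge> 1" "\<omega> \<in> space M"
      show "simes_q \<alpha> m (\<lambda>i. p i \<omega>) (J m (\<lambda>i. p i \<omega>)) \<le> pibar P \<alpha> * q"
      proof (cases "\<forall>i\<in>{1..m}. p i \<omega> \<le> \<alpha>")
        case True
        then show ?thesis using zero_bound[OF alpha(1) True] by (simp add: J_def pib)
      next
        case False
        then have "J m (\<lambda>i. p i \<omega>) = {}" unfolding J_def by auto
        then show ?thesis by (simp add: pib simes_q_def)
      qed
    next
      have AEi: "AE \<omega> in M. p i \<omega> \<le> \<alpha>" if "i \<ge> 1" for i
      proof -
        have [measurable]: "p i \<in> borel_measurable M" using p_rv that .
        have "prob {\<omega>\<in>space M. p i \<omega> \<le> \<alpha>} = 1" using p_dist[OF that, of \<alpha>] Pa alpha by simp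
        then show ?thesis by (subst (asm) prob_Collect_eq_1) measurable
      qed
      have ev: "\<forall>\<^sub>F m in sequentially. 1 = measure M {\<omega>\<in>space M. real (card (J m (\<lambda>i. p i \<omega>))) / real m \<ge> 1}"
        using eventually_ge_at_top[of 1]
      proof (rule eventually_mono)
        fix m :: nat assume m: "m \<ge> 1"
        have eq: "{\<omega>\<in>space M. real (card (J m (\<lambda>i. p i \<omega>))) / real m \<ge> 1} = {\<omega>\<in>space M. \<forall>i\<in>{1..m}. p i \<omega> \<le> \<alpha>}"
        proof (intro Collect_cong conj_cong refl)
          fix \<omega>
          show "(1 \<le> real (card (J m (\<lambda>i. p i \<omega>))) / real m) = (\<forall>i\<in>{1..m}. p i \<omega> \<le> \<alpha>)"
          proof (cases "\<forall>i\<in>{1..m}. p i \<omega> \<le> \<alpha>")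
            case True
            then have "J m (\<lambda>i. p i \<omega>) = {1..m}" unfolding J_def by auto
            then show ?thesis using True m by simp
          next
            case False
            then have "J m (\<lambda>i. p i \<omega>) = {}" unfolding J_def by auto
            then show ?thesis using False by simp
          qed
        qed
        have meas: "{\<omega>\<in>space M. \<forall>i\<in>{1..m}. p i \<omega> \<le> \<alpha>} \<in> events"
        proof -
          have "{\<omega>\<in>space M. \<forall>i\<in>{1..m}. p i \<omega> \<le> \<alpha>} = space M \<inter> (\<Inter>i\<in>{1..m}. {\<omega>\<in>space M. p i \<omega> \<le> \<alpha>})"
            by auto
          also have "\<dots> \<in> events"
          proof (rule sets.Int[OF sets.top], rule sets.finite_INT)
            fix i assume "i \<in> {1..m}"
            then have [measurable]: "p i \<in> borel_measurable M" using p_rv by auto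
            show "{\<omega>\<in>space M. p i \<omega> \<le> \<alpha>} \<in> events" by measurable
          qed (use m in auto)
          finally show ?thesis .
        qed
        have "AE \<omega> in M. \<forall>i\<in>{1..m}. p i \<omega> \<le> \<alpha>"
          by (rule AE_finite_allI) (use AEi in auto)
        then have "prob {\<omega>\<in>space M. \<forall>i\<in>{1..m}. p i \<omega> \<le> \<alpha>} = 1"
          using prob_Collect_eq_1[OF meas] by simp
        then show "1 = measure M {\<omega>\<in>space M. real (card (J m (\<lambda>i. p i \<omega>))) / real m \<ge> 1}"
          using eq by simp
      qed
      show "\<exists>y>0. (\<lambda>m. measure M {\<omega>\<in>space M. real (card (J m (\<lambda>i. p i \<omega>))) / real m \<ge> y}) \<longlonglongrightarrow> 1"
        by (intro exI[of _ 1] conjI Lim_transform_eventually[OF tendsto_const ev]) simp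
    qed
  next
    case True
    define \<pi> where "\<pi> = pibar P \<alpha>"
    have pi_def': "\<pi> = (INF x\<in>{0..<1}. (1 - P (x * \<alpha>)) / (1 - x))"
      unfolding \<pi>_def pibar_def using True by simp
    have bdd: "bdd_below ((\<lambda>x. (1 - P (x * a)) / (1 - x)) ` {0..<1})" if "0 \<le> a" "a \<le> 1" for a
    proof (rule bdd_belowI2[of _ 0])
      fix x :: real assume x: "x \<in> {0..<1}"
      then have "x * a \<in> {0..1}" using that by (auto simp: mult_le_one)
      then show "0 \<le> (1 - P (x * a)) / (1 - x)" using Ple1 x by auto
    qed
    have pipos: "\<pi> > 0"
    proof -
      have "1 - P \<alpha> \<le> \<pi>" unfolding pi_def'
      proof (rule cINF_greatest)
        fix x :: real assume x: "x \<in> {0..<1}"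
        then have xa: "x * \<alpha> \<in> {0..1}" "x * \<alpha> \<le> \<alpha>" using alpha by (auto simp: mult_le_one mult_left_le_one_le)
        have "1 - P \<alpha> \<le> 1 - P (x * \<alpha>)" using Pmono[of "x * \<alpha>" \<alpha>] xa alpha by auto
        also have "\<dots> \<le> (1 - P (x * \<alpha>)) / (1 - x)"
          using x Ple1[OF xa(1)] by (auto simp: le_divide_eq mult_left_le)
        finally show "1 - P \<alpha> \<le> (1 - P (x * \<alpha>)) / (1 - x)" .
      qed auto
      then show ?thesis using True by simp
    qed
    obtain x1 where x1: "x1 \<in> {0..<1}" "P (x1 * q * \<alpha>) > x1"
    proof -
      have qa: "q * \<alpha> \<in> {0..1}" "q * \<alpha> \<le> \<alpha>" using q alpha by (auto simp: mult_le_one mult_left_le_one_le)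
      have "P (q * \<alpha>) < 1" using Pmono[of "q * \<alpha>" \<alpha>] qa alpha True by auto
      then have "(INF x\<in>{0..<1}. (1 - P (x * (q * \<alpha>))) / (1 - x)) < 1"
        using detect unfolding simes_detectable_def pibar_def by simp
      then obtain x where x: "x \<in> {0..<1}" "(1 - P (x * (q * \<alpha>))) / (1 - x) < 1"
        using cINF_less_iff[OF _ bdd[OF qa(1)[simplified, THEN conjunct1] qa(1)[simplified, THEN conjunct2]]] by auto
      then have "P (x * q * \<alpha>) > x" by (simp add: divide_less_eq mult.assoc)
      then show ?thesis using that x by blast
    qed
    define c where "c = x1 * q * \<alpha>"
    have c01: "c \<in> {0..1}" unfolding c_def using x1 q alpha by (auto simp: mult_le_one)
    define b where "b = P c"
    have bx1: "b > x1" "b > 0" using x1 unfolding b_def c_def by auto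
    obtain x0 where x0: "x0 \<in> {0..<1}" "x1 * (1 - P (x0 * \<alpha>)) < \<pi> * (1 - x0) * b"
    proof (cases "x1 = 0")
      case True
      then show ?thesis using that[of 0] pipos bx1 by simp
    next
      case False
      then have x1p: "x1 > 0" using x1 by simp
      have "\<pi> * 1 < \<pi> * (b / x1)" using pipos bx1 x1p by (intro mult_strict_left_mono) (auto simp: less_divide_eq)
      then have "(INF x\<in>{0..<1}. (1 - P (x * \<alpha>)) / (1 - x)) < \<pi> * b / x1" unfolding pi_def'[symmetric] by simp
      then obtain x where x: "x \<in> {0..<1}" "(1 - P (x * \<alpha>)) / (1 - x) < \<pi> * b / x1"
        using cINF_less_iff[OF _ bdd[of \<alpha>]] alpha by auto
      then have "(1 - P (x * \<alpha>)) < \<pi> * b / x1 * (1 - x)" by (simp add: divide_less_eq)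
      then have "x1 * (1 - P (x * \<alpha>)) < x1 * (\<pi> * b / x1 * (1 - x))" using x1p
        by (intro mult_strict_left_mono) simp_all
      also have "\<dots> = \<pi> * (1 - x) * b" using x1p by simp
      finally show ?thesis using that x by blast
    qed
    define t0 where "t0 = x0 * \<alpha>"
    have t01: "t0 \<in> {0..1}" unfolding t0_def using x0 alpha by (auto simp: mult_le_one)
    define a where "a = P t0"
    define \<delta> where "\<delta> = \<pi> * (1 - x0) * b - x1 * (1 - a)"
    have \<delta>pos: "\<delta> > 0" using x0 unfolding \<delta>_def a_def t0_def by simp
    define \<epsilon> where "\<epsilon> = min (b / 2) (\<delta> / (x1 + \<pi> + 1))"
    have epos: "\<epsilon> > 0" unfolding \<epsilon>_def using bx1 \<delta>pos pipos x1 by auto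
    have eb: "\<epsilon> \<le> b / 2" unfolding \<epsilon>_def by (rule min.cobounded1)
    have ed: "(x1 + \<pi>) * \<epsilon> \<le> \<delta>"
    proof -
      have "\<epsilon> \<le> \<delta> / (x1 + \<pi> + 1)" unfolding \<epsilon>_def by (rule min.cobounded2)
      then have "(x1 + \<pi> + 1) * \<epsilon> \<le> \<delta>" using pipos x1 by (simp add: le_divide_eq mult.commute)
      then show ?thesis using epos by (simp add: algebra_simps)
    qed
    define y where "y = b / 2"
    define J where "J m x = (if x1 * (real m - real (card {i\<in>{1..m}. x i \<le> t0}))
        \<le> \<pi> * (1 - x0) * real (card {i\<in>{1..m}. x i \<le> c}) then {i\<in>{1..m}. x i \<le> c} else {})"
      for m and x :: "nat \<Rightarrow> real"
    show ?thesis
    proof (intro exI[of _ J] conjI allI impI ballI)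
      fix m and x :: "nat \<Rightarrow> real" show "J m x \<subseteq> {1..m}" unfolding J_def by auto
    next
      fix m and x x' :: "nat \<Rightarrow> real" assume xx: "\<forall>i\<in>{1..m}. x i = x' i"
      then have "{i\<in>{1..m}. x i \<le> s} = {i\<in>{1..m}. x' i \<le> s}" for s by auto
      then show "J m x = J m x'" unfolding J_def by simp
    next
      fix m :: nat and \<omega> assume "m \<ge> 1" "\<omega> \<in> space M"
      show "simes_q \<alpha> m (\<lambda>i. p i \<omega>) (J m (\<lambda>i. p i \<omega>)) \<le> pibar P \<alpha> * q"
      proof (cases "x1 * (real m - real (card {i\<in>{1..m}. p i \<omega> \<le> t0}))
        \<le> \<pi> * (1 - x0) * real (card {i\<in>{1..m}. p i \<omega> \<le> c})")
        case True
        then show ?thesis unfolding J_def \<pi>_def[symmetric]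
          using q_bound[OF alpha(1), of x0 x1 q \<pi> c t0 m "\<lambda>i. p i \<omega>"] x0 x1 q pipos
          by (simp add: c_def t0_def)
      next
        case False
        then show ?thesis unfolding J_def \<pi>_def[symmetric] using pipos q by (simp add: simes_q_def)
      qed
    next
      define A1 where "A1 m = {\<omega>\<in>space M. \<bar>Nr m t0 \<omega> / real m - P t0\<bar> \<ge> \<epsilon>}" for m
      define A2 where "A2 m = {\<omega>\<in>space M. \<bar>Nr m c \<omega> / real m - P c\<bar> \<ge> \<epsilon>}" for m
      define SJ where "SJ m = {\<omega>\<in>space M. real (card (J m (\<lambda>i. p i \<omega>))) / real m \<ge> y}" for m
      have L1: "(\<lambda>m. prob (A1 m)) \<longlonglongrightarrow> 0" unfolding A1_def Nr_def
        by (rule LLN[OF \<open>prob_space M\<close> p_rv p_dist p_indep t01 epos])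
      have L2: "(\<lambda>m. prob (A2 m)) \<longlonglongrightarrow> 0" unfolding A2_def Nr_def
        by (rule LLN[OF \<open>prob_space M\<close> p_rv p_dist p_indep c01 epos])
      have A1m[measurable]: "A1 m \<in> events" for m unfolding A1_def by measurable
      have A2m[measurable]: "A2 m \<in> events" for m unfolding A2_def by measurable
      have SJeq: "SJ m = {\<omega>\<in>space M. (x1 * (real m - Nr m t0 \<omega>) \<le> \<pi> * (1 - x0) * Nr m c \<omega>) \<and> Nr m c \<omega> / real m \<ge> y}" for m
      proof -
        have yp: "y > 0" unfolding y_def using bx1 by simp
        have cN: "real (card {i\<in>{1..m}. p i \<omega> \<le> t}) = Nr m t \<omega>" for t \<omega>
          unfolding Nr_def by (rule card_Nr)
        show ?thesis unfolding SJ_def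
        proof (intro Collect_cong conj_cong refl)
          fix \<omega>
          show "(y \<le> real (card (J m (\<lambda>i. p i \<omega>))) / real m) =
            (x1 * (real m - Nr m t0 \<omega>) \<le> \<pi> * (1 - x0) * Nr m c \<omega> \<and> y \<le> Nr m c \<omega> / real m)"
          proof (cases "x1 * (real m - Nr m t0 \<omega>) \<le> \<pi> * (1 - x0) * Nr m c \<omega>")
            case True
            have JS: "J m (\<lambda>i. p i \<omega>) = {i\<in>{1..m}. p i \<omega> \<le> c}"
              unfolding J_def cN by (rule if_P[OF True])
            show ?thesis unfolding JS cN using True by simp
          next
            case False
            have "J m (\<lambda>i. p i \<omega>) = {}"
              unfolding J_def cN by (rule if_not_P[OF False])
            then show ?thesis using False yp by simp
          qed
        qed
      qed
      have SJm: "SJ m \<in> events" for m unfolding SJeq by measurable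
      have low: "1 - prob (A1 m) - prob (A2 m) \<le> prob (SJ m)" if m: "m \<ge> 1" for m
      proof -
        have sub: "space M - SJ m \<subseteq> A1 m \<union> A2 m"
        proof
          fix \<omega> assume \<omega>: "\<omega> \<in> space M - SJ m"
          show "\<omega> \<in> A1 m \<union> A2 m"
          proof (rule ccontr)
            assume "\<omega> \<notin> A1 m \<union> A2 m"
            then have n0: "\<bar>Nr m t0 \<omega> / real m - a\<bar> < \<epsilon>" and nc: "\<bar>Nr m c \<omega> / real m - b\<bar> < \<epsilon>"
              using \<omega> unfolding A1_def A2_def a_def b_def by auto
            define n0 where "n0 = Nr m t0 \<omega> / real m"
            define nc where "nc = Nr m c \<omega> / real m"
            have mpos: "real m > 0" using m by simp
            have h1: "x1 * (1 - n0) \<le> x1 * (1 - a) + x1 * \<epsilon>"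
            proof -
              have "x1 * (1 - n0) \<le> x1 * (1 - a + \<epsilon>)" using n0 x1 unfolding n0_def
                by (intro mult_left_mono) auto
              then show ?thesis by (simp add: algebra_simps)
            qed
            have h2: "\<pi> * (1 - x0) * nc \<ge> \<pi> * (1 - x0) * b - \<pi> * \<epsilon>"
            proof -
              have "\<pi> * (1 - x0) * (b - \<epsilon>) \<le> \<pi> * (1 - x0) * nc" using nc pipos x0 unfolding nc_def
                by (intro mult_left_mono) auto
              moreover have "\<pi> * (1 - x0) * \<epsilon> \<le> \<pi> * \<epsilon>" using pipos x0 epos
                by (simp add: mult_left_le mult.assoc mult_le_cancel_left1 mult_right_le_one_le)
              ultimately show ?thesis by (simp add: algebra_simps)
            qed
            have h3: "x1 * (1 - n0) \<le> \<pi> * (1 - x0) * nc"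
              using h1 h2 ed unfolding \<delta>_def by (simp add: algebra_simps)
            have eq1: "x1 * (real m - Nr m t0 \<omega>) = real m * (x1 * (1 - n0))"
              unfolding n0_def using mpos by (simp add: algebra_simps)
            have eq2: "\<pi> * (1 - x0) * Nr m c \<omega> = real m * (\<pi> * (1 - x0) * nc)"
              unfolding nc_def using mpos by simp
            have "real m * (x1 * (1 - n0)) \<le> real m * (\<pi> * (1 - x0) * nc)"
              using h3 mpos by (intro mult_left_mono) auto
            then have cnd: "x1 * (real m - Nr m t0 \<omega>) \<le> \<pi> * (1 - x0) * Nr m c \<omega>"
              by (simp only: eq1 eq2)
            have "nc \<ge> y" using nc eb unfolding nc_def y_def by auto
            then have "\<omega> \<in> SJ m" using cnd \<omega> unfolding SJeq nc_def by auto
            then show False using \<omega> by simp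
          qed
        qed
        have "prob (space M - SJ m) \<le> prob (A1 m \<union> A2 m)"
          by (rule finite_measure_mono[OF sub]) measurable
        also have "\<dots> \<le> prob (A1 m) + prob (A2 m)" by (rule measure_Un_le) measurable
        finally show ?thesis using finite_measure_compl[OF SJm] prob_space by simp
      qed
      have "(\<lambda>m. prob (SJ m)) \<longlonglongrightarrow> 1"
      proof (rule tendsto_sandwich[of "\<lambda>m. 1 - prob (A1 m) - prob (A2 m)" _ _ "\<lambda>_. 1"])
        show "\<forall>\<^sub>F n in sequentially. 1 - prob (A1 n) - prob (A2 n) \<le> prob (SJ n)"
          using eventually_ge_at_top[of 1] by (rule eventually_mono) (rule low)
        show "\<forall>\<^sub>F n in sequentially. prob (SJ n) \<le> 1" by simp
        show "(\<lambda>m. 1 - prob (A1 m) - prob (A2 m)) \<longlonglongrightarrow> 1"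
          using tendsto_diff[OF tendsto_diff[OF tendsto_const L1] L2] by simp
      qed simp
      then show "\<exists>y>0. (\<lambda>m. measure M {\<omega>\<in>space M. real (card (J m (\<lambda>i. p i \<omega>))) / real m \<ge> y}) \<longlonglongrightarrow> 1"
        using bx1 unfolding SJ_def y_def by (intro exI[of _ "b / 2"]) auto
    qed
  qed
qed

end
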